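(* Under the hypotheses of the approximate projection proposition ($V$ Hilbert, $Q\subset V$ with $M_Q<\infty$ and $-Q=Q$, $f:V\to\mathbb R^k$ linear with the Johnson–Lindenstrauss property on $Q$ with parameter $\epsilon>0$), let $C_Q:=\inf\{c\in\mathbb R_+:\|\mathbf v\|_Q\le c\|\mathbf v\|\ \text{for all }\mathbf v\in\mathrm{span}\{Q\}\}$. Then for every $\mathbf v\in\mathrm{span}\{Q\}$ such that $(f^*\circ f)(\mathbf v)\in\mathrm{span}\{Q\}$, $$\|(\mathbb I_V-f^*\circ f)(\mathbf v)\|\le\epsilon M_Q^2C_Q^2\|\mathbf v\|.$$
   Context: $M_Q=\sup\{\|\mathbf v\|:\mathbf v\in Q\}$; $\|\mathbf v\|_Q=\inf\{\sum_j|\lambda_j|:\sum_j\lambda_j\mathbf v_j=\mathbf v,\ \mathbf v_j\in Q\}$ over finite combinations. Johnson–Lindenstrauss property with parameter $\epsilon$: $(1-\epsilon)\|\mathbf v_1-\mathbf v_2\|^2\le\|f(\mathbf v_1)-f(\mathbf v_2)\|^2\le(1+\epsilon)\|\mathbf v_1-\mathbf v_2\|^2$ for all $\mathbf v_1,\mathbf v_2\in Q$, the norm on $\mathbb R^k$ being induced by a fixed inner product; $f^*$ is the adjoint of $f$. *)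

theory Defs
  imports "HOL-Analysis.Analysis"
begin

definition MQ :: "'a::real_normed_vector set \<Rightarrow> real" where
  "MQ Q = Sup (norm ` Q)"

definition atomic_norm :: "'a::real_vector set \<Rightarrow> 'a \<Rightarrow> real" where
  "atomic_norm Q v = Inf {(\<Sum>i\<in>I. \<bar>c i\<bar>) | I c u.
      finite (I :: nat set) \<and> (\<forall>i\<in>I. u i \<in> Q) \<and> (\<Sum>i\<in>I. c i *\<^sub>R u i) = v}"

definition JL_property :: "('a::real_normed_vector \<Rightarrow> 'b::real_normed_vector) \<Rightarrow> 'a set \<Rightarrow> real \<Rightarrow> bool" where
  "JL_property f Q eps \<longleftrightarrow> (\<forall>v1\<in>Q. \<forall>v2\<in>Q.
      (1 - eps) * (norm (v1 - v2))\<^sup>2 \<le> (norm (f v1 - f v2))\<^sup>2 \<and>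
      (norm (f v1 - f v2))\<^sup>2 \<le> (1 + eps) * (norm (v1 - v2))\<^sup>2)"

text \<open>C_Q as an extended real (infimum of the empty set is +infinity).\<close>
definition CQ :: "'a::real_normed_vector set \<Rightarrow> ereal" where
  "CQ Q = Inf (ereal ` {c. c \<ge> 0 \<and> (\<forall>v\<in>span Q. atomic_norm Q v \<le> c * norm v)})"

end

theory Submission
  imports Defs
begin

lemma riesz_aux:
  fixes phi :: "'a::{real_inner, complete_space} \<Rightarrow> real"
  assumes bl: "bounded_linear phi" and a: "phi a = 1"
  shows "\<exists>w. \<forall>x. phi x = x \<bullet> w"
proof -
  interpret L: bounded_linear phi by fact
  define H where "H = {x. phi x = 1}"
  define d where "d = Inf (norm ` H)"
  have Hne: "norm ` H \<noteq> {}" using a H_def by auto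
  have bdd: "bdd_below (norm ` H)" by (auto intro: bdd_belowI[where m=0])
  have dle: "d \<le> norm x" if "x \<in> H" for x
    unfolding d_def using bdd that by (simp add: cInf_lower)
  have d0: "d \<ge> 0" unfolding d_def using Hne by (auto intro: cInf_greatest)
  have "\<forall>n. \<exists>x. x \<in> H \<and> norm x < d + 1 / (real n + 1)"
  proof
    fix n :: nat
    have "Inf (norm ` H) < d + 1 / (real n + 1)" unfolding d_def by (simp add: add_pos_pos)
    then obtain t where "t \<in> norm ` H" "t < d + 1 / (real n + 1)"
      using cInf_lessD[OF Hne] by blast
    then show "\<exists>x. x \<in> H \<and> norm x < d + 1 / (real n + 1)" by auto
  qed
  then obtain x where xH: "\<And>n. x n \<in> H" and xn: "\<And>n. norm (x n) < d + 1 / (real n + 1)"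
    by metis
  define e where "e n = 1 / (real n + 1)" for n :: nat
  have e0: "0 < e n" "e n \<le> 1" for n unfolding e_def by auto
  have key: "(norm (x n - x m))\<^sup>2 \<le> (4*d+2) * (e n + e m)" for n m
  proof -
    have mid: "(1/2) *\<^sub>R (x n + x m) \<in> H" using xH[of n] xH[of m]
      by (simp add: H_def L.add L.scaleR)
    have "2 * d \<le> norm (x n + x m)"
      using dle[OF mid] by simp
    then have s: "4 * d\<^sup>2 \<le> (norm (x n + x m))\<^sup>2"
    proof -
      have "(2*d)\<^sup>2 \<le> (norm (x n + x m))\<^sup>2" using \<open>2 * d \<le> _\<close> d0 by (intro power_mono) auto
      then show ?thesis by (simp add: power_mult_distrib)
    qed
    have par: "(norm (x n - x m))\<^sup>2 + (norm (x n + x m))\<^sup>2 = 2*(norm (x n))\<^sup>2 + 2*(norm (x m))\<^sup>2"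
      by (simp add: power2_norm_eq_inner inner_diff_left inner_diff_right inner_add_left inner_add_right inner_commute)
    have n1: "(norm (x n))\<^sup>2 \<le> (d + e n)\<^sup>2" using xn[of n] unfolding e_def
      by (intro power_mono) auto
    have n2: "(norm (x m))\<^sup>2 \<le> (d + e m)\<^sup>2" using xn[of m] unfolding e_def
      by (intro power_mono) auto
    have "(d + e n)\<^sup>2 \<le> d\<^sup>2 + (2*d+1) * e n"
    proof -
      have "e n * e n \<le> e n" using mult_left_mono[of "e n" 1 "e n"] e0[of n] by simp
      then show ?thesis by (simp add: power2_eq_square algebra_simps)
    qed
    moreover have "(d + e m)\<^sup>2 \<le> d\<^sup>2 + (2*d+1) * e m"
    proof -
      have "e m * e m \<le> e m" using mult_left_mono[of "e m" 1 "e m"] e0[of m] by simp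
      then show ?thesis by (simp add: power2_eq_square algebra_simps)
    qed
    ultimately show ?thesis using par n1 n2 s by (simp add: algebra_simps)
  qed
  have cauchy: "Cauchy x"
  proof (rule metric_CauchyI)
    fix eps :: real assume "eps > 0"
    obtain N :: nat where N: "real N > 4 * (4*d+2) / eps\<^sup>2" using reals_Archimedean2 by blast
    show "\<exists>M. \<forall>m\<ge>M. \<forall>n\<ge>M. dist (x m) (x n) < eps"
    proof (intro exI allI impI)
      fix m n assume mn: "m \<ge> N" "n \<ge> N"
      have pos: "0 < 4*d+2" using d0 by simp
      have em: "e m \<le> 1 / (real N + 1)" "e n \<le> 1 / (real N + 1)" unfolding e_def using mn
        by (auto intro!: divide_left_mono)
      have "(norm (x m - x n))\<^sup>2 \<le> (4*d+2) * (2 / (real N + 1))"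
      proof -
        have "(4*d+2) * (e m + e n) \<le> (4*d+2) * (2 / (real N + 1))"
          using em pos by (intro mult_left_mono) auto
        then show ?thesis using key[of m n] by linarith
      qed
      also have "\<dots> < eps\<^sup>2"
      proof -
        have "4 * (4*d+2) < eps\<^sup>2 * real N" using N \<open>eps>0\<close> by (simp add: field_simps)
        moreover have "0 < eps\<^sup>2" using \<open>eps>0\<close> by simp
        moreover have "eps\<^sup>2 * (real N + 1) = eps\<^sup>2 * real N + eps\<^sup>2" by (simp add: algebra_simps)
        ultimately have h0: "4 * (4*d+2) < eps\<^sup>2 * real N" "0 < eps\<^sup>2" by auto
        have h1: "2*(4*d+2) < 4*(4*d+2)" using pos by simp
        have h2: "eps\<^sup>2 * real N < eps\<^sup>2 * real N + eps\<^sup>2" using h0(2) by simp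
        have "2 * (4*d+2) < eps\<^sup>2 * real N + eps\<^sup>2" using h0(1) h1 h2 by (meson less_trans)
        then have "2 * (4*d+2) < eps\<^sup>2 * (real N + 1)" by (simp add: algebra_simps)
        then have "2 * (4*d+2) / (real N + 1) < eps\<^sup>2" by (simp add: pos_divide_less_eq)
        then show ?thesis by simp
      qed
      finally have "(norm (x m - x n))\<^sup>2 < eps\<^sup>2" .
      then show "dist (x m) (x n) < eps" using \<open>eps>0\<close>
        by (simp add: dist_norm power_less_imp_less_base)
    qed
  qed
  then obtain z where lim: "x \<longlonglongrightarrow> z" using complete_UNIV convergent_eq_Cauchy by blast
  have "(\<lambda>n. phi (x n)) \<longlonglongrightarrow> phi z" by (rule L.tendsto[OF lim])
  moreover have "(\<lambda>n. phi (x n)) = (\<lambda>n. 1)" using xH H_def by auto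
  ultimately have "(\<lambda>n. 1::real) \<longlonglongrightarrow> phi z" by simp
  then have zH: "phi z = 1" by (simp add: LIMSEQ_const_iff)
  have "(\<lambda>n. d + 1 / (real n + 1)) \<longlonglongrightarrow> d + 0"
  proof -
    have "(\<lambda>n. d + inverse (real (Suc n))) \<longlonglongrightarrow> d" by (rule LIMSEQ_inverse_real_of_nat_add)
    moreover have "(\<lambda>n. d + inverse (real (Suc n))) = (\<lambda>n. d + 1 / (real n + 1))"
      by (simp add: inverse_eq_divide add.commute)
    ultimately show ?thesis by simp
  qed
  then have "norm z \<le> d"
    using tendsto_norm[OF lim] xn by (intro LIMSEQ_le[where X="\<lambda>n. norm (x n)"]) (auto intro: less_imp_le)
  then have zmin: "norm z \<le> norm y" if "phi y = 1" for y using dle[of y] that H_def by auto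
  have orth: "z \<bullet> n = 0" if "phi n = 0" for n
  proof -
    define s where "s = z \<bullet> n"
    define N where "N = (norm n)\<^sup>2"
    define t where "t = - s / (N + 1)"
    have N0: "N \<ge> 0" unfolding N_def by simp
    have "phi (z + t *\<^sub>R n) = 1" using zH that by (simp add: L.add L.scaleR)
    then have "(norm z)\<^sup>2 \<le> (norm (z + t *\<^sub>R n))\<^sup>2" using zmin by (simp add: power_mono)
    also have "\<dots> = (norm z)\<^sup>2 + 2 * t * s + t\<^sup>2 * N"
      unfolding s_def N_def by (simp only: power2_norm_eq_inner) (simp add: inner_add_left inner_add_right inner_commute algebra_simps power2_eq_square)
    finally have "0 \<le> 2 * t * s + t\<^sup>2 * N" by simp
    then have "0 \<le> (2 * t * s + t\<^sup>2 * N) * (N+1)^2" using N0 by simp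
    also have "\<dots> = - s\<^sup>2 * (N + 2)"
    proof -
      have tt: "t * (N+1) = - s" unfolding t_def using N0 by (simp add: field_simps)
      have "(2 * t * s + t\<^sup>2 * N) * (N+1)^2 = 2 * s * (N+1) * (t * (N+1)) + N * (t * (N+1))^2"
        by (simp add: power2_eq_square algebra_simps)
      also have "\<dots> = - s\<^sup>2 * (N + 2)" unfolding tt by (simp add: power2_eq_square algebra_simps)
      finally show ?thesis .
    qed
    finally have "s\<^sup>2 * (N+2) \<le> 0" by simp
    then have "s\<^sup>2 \<le> 0" using N0 by (simp add: mult_le_0_iff)
    then show ?thesis unfolding s_def by simp
  qed
  have zn: "z \<noteq> 0" using zH by auto
  show ?thesis
  proof (intro exI allI)
    fix y
    have "phi (y - phi y *\<^sub>R z) = 0" using zH by (simp add: L.diff L.scaleR)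
    then have "z \<bullet> (y - phi y *\<^sub>R z) = 0" by (rule orth)
    then have "z \<bullet> y = phi y * (z \<bullet> z)" by (simp add: inner_diff_right)
    then show "phi y = y \<bullet> ((1 / (z \<bullet> z)) *\<^sub>R z)" using zn by (simp add: inner_commute)
  qed
qed

lemma riesz:
  fixes phi :: "'a::{real_inner, complete_space} \<Rightarrow> real"
  assumes bl: "bounded_linear phi"
  shows "\<exists>w. \<forall>x. phi x = x \<bullet> w"
proof (cases "\<forall>x. phi x = 0")
  case True then show ?thesis by (intro exI[of _ 0]) simp
next
  case False
  then obtain b where b: "phi b \<noteq> 0" by auto
  interpret L: bounded_linear phi by fact
  have "phi ((1 / phi b) *\<^sub>R b) = 1" using b by (simp add: L.scaleR)
  from riesz_aux[OF bl this] show ?thesis .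
qed


lemma adjoint_props:
  fixes f :: "'a::{real_inner, complete_space} \<Rightarrow> 'b::euclidean_space"
  assumes bl: "bounded_linear f"
  shows "\<forall>x y. x \<bullet> adjoint f y = f x \<bullet> y" "adjoint f 0 = 0"
proof -
  have "\<forall>b. \<exists>w. \<forall>x. f x \<bullet> b = x \<bullet> w"
  proof
    fix b :: 'b
    have "bounded_linear (\<lambda>x. f x \<bullet> b)"
      by (rule bounded_linear_compose[OF bounded_linear_inner_left bl])
    then show "\<exists>w. \<forall>x. f x \<bullet> b = x \<bullet> w" by (rule riesz)
  qed
  then obtain W where W: "\<And>b x. f x \<bullet> b = x \<bullet> W b" by metis
  define g where "g y = (\<Sum>b\<in>Basis. (y \<bullet> b) *\<^sub>R W b)" for y
  have gw: "f x \<bullet> y = x \<bullet> g y" for x y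
  proof -
    have "f x \<bullet> y = (\<Sum>b\<in>Basis. (f x \<bullet> b) * (y \<bullet> b))" by (rule euclidean_inner)
    also have "\<dots> = (\<Sum>b\<in>Basis. (x \<bullet> W b) * (y \<bullet> b))" by (simp add: W)
    also have "\<dots> = x \<bullet> g y" unfolding g_def by (simp add: inner_sum_right mult.commute)
    finally show ?thesis .
  qed
  then have "adjoint f = g" by (intro adjoint_unique) auto
  then show "\<forall>x y. x \<bullet> adjoint f y = f x \<bullet> y" "adjoint f 0 = 0"
    using gw by (auto simp: g_def)
qed

lemma span_repr:
  assumes "x \<in> span Q"
  shows "\<exists>I c u. finite (I :: nat set) \<and> (\<forall>i\<in>I. u i \<in> Q) \<and> (\<Sum>i\<in>I. c i *\<^sub>R u i) = x"
proof -
  obtain T a where T: "finite T" "T \<subseteq> Q" "(\<Sum>v\<in>T. a v *\<^sub>R v) = x"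
    using assms unfolding span_explicit by blast
  obtain h where h: "bij_betw h {0..<card T} T" using ex_bij_betw_nat_finite[OF T(1)] by blast
  have "(\<Sum>i\<in>{0..<card T}. (a (h i)) *\<^sub>R h i) = (\<Sum>v\<in>T. a v *\<^sub>R v)"
    using sum.reindex_bij_betw[OF h, of "\<lambda>v. a v *\<^sub>R v"] by simp
  moreover have "\<forall>i\<in>{0..<card T}. h i \<in> Q" using h T(2) bij_betwE by blast
  ultimately show ?thesis using T(3) by (intro exI[of _ "{0..<card T}"] exI[of _ "\<lambda>i. a (h i)"] exI[of _ h]) auto
qed

lemma atomic_nonneg: "atomic_norm Q x \<ge> 0" if "x \<in> span Q"
proof -
  from span_repr[OF that] obtain I c u where "finite (I :: nat set)" "\<forall>i\<in>I. u i \<in> Q" "(\<Sum>i\<in>I. c i *\<^sub>R u i) = x"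
    by blast
  then have ne: "{(\<Sum>i\<in>I. \<bar>c i\<bar>) | I c u.
      finite (I :: nat set) \<and> (\<forall>i\<in>I. u i \<in> Q) \<and> (\<Sum>i\<in>I. c i *\<^sub>R u i) = x} \<noteq> {}" by blast
  show ?thesis unfolding atomic_norm_def
    by (rule cInf_greatest[OF ne]) (auto intro: sum_nonneg)
qed

lemma inf_mult:
  fixes S :: "real set"
  assumes "S \<noteq> {}" "\<forall>t\<in>S. b \<le> K * t" "0 \<le> K"
  shows "b \<le> K * Inf S"
proof (cases "K = 0")
  case True then show ?thesis using assms by auto
next
  case False
  then have K: "K > 0" using assms by simp
  have "b / K \<le> Inf S"
    by (rule cInf_greatest[OF assms(1)]) (use assms(2) K in \<open>auto simp: pos_divide_le_eq mult.commute\<close>)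
  then show ?thesis using K by (simp add: pos_divide_le_eq mult.commute)
qed

lemma B_repr:
  fixes f :: "'a::real_inner \<Rightarrow> 'b::real_inner"
  assumes lin: "linear f" and hQ: "\<forall>u1\<in>Q. \<forall>u2\<in>Q. \<bar>u1 \<bullet> u2 - f u1 \<bullet> f u2\<bar> \<le> K"
    and "\<forall>i\<in>I. u i \<in> Q" "\<forall>j\<in>J. w j \<in> Q"
  shows "\<bar>(\<Sum>i\<in>I. c i *\<^sub>R u i) \<bullet> (\<Sum>j\<in>J. d j *\<^sub>R w j)
          - f (\<Sum>i\<in>I. c i *\<^sub>R u i) \<bullet> f (\<Sum>j\<in>J. d j *\<^sub>R w j)\<bar>
        \<le> K * (\<Sum>i\<in>I. \<bar>c i\<bar>) * (\<Sum>j\<in>J. \<bar>d j\<bar>)"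
proof -
  interpret L: linear f by fact
  have "(\<Sum>i\<in>I. c i *\<^sub>R u i) \<bullet> (\<Sum>j\<in>J. d j *\<^sub>R w j)
          - f (\<Sum>i\<in>I. c i *\<^sub>R u i) \<bullet> f (\<Sum>j\<in>J. d j *\<^sub>R w j)
      = (\<Sum>i\<in>I. \<Sum>j\<in>J. c i * d j * (u i \<bullet> w j - f (u i) \<bullet> f (w j)))"
  proof -
    have e1: "(\<Sum>i\<in>I. c i *\<^sub>R u i) \<bullet> (\<Sum>j\<in>J. d j *\<^sub>R w j)
        = (\<Sum>i\<in>I. \<Sum>j\<in>J. c i * d j * (u i \<bullet> w j))"
      by (simp add: inner_sum_left inner_sum_right sum_distrib_left mult.assoc mult.left_commute sum.swap[where A=J])
    have e2: "f (\<Sum>i\<in>I. c i *\<^sub>R u i) \<bullet> f (\<Sum>j\<in>J. d j *\<^sub>R w j)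
        = (\<Sum>i\<in>I. \<Sum>j\<in>J. c i * d j * (f (u i) \<bullet> f (w j)))"
      by (simp add: L.sum L.scale inner_sum_left inner_sum_right sum_distrib_left mult.assoc mult.left_commute sum.swap[where A=J])
    show ?thesis unfolding e1 e2 by (simp add: sum_subtractf[symmetric] right_diff_distrib)
  qed
  also have "\<bar>\<dots>\<bar> \<le> (\<Sum>i\<in>I. \<Sum>j\<in>J. \<bar>c i\<bar> * \<bar>d j\<bar> * K)"
  proof -
    have "\<bar>(\<Sum>i\<in>I. \<Sum>j\<in>J. c i * d j * (u i \<bullet> w j - f (u i) \<bullet> f (w j)))\<bar>
        \<le> (\<Sum>i\<in>I. \<Sum>j\<in>J. \<bar>c i * d j * (u i \<bullet> w j - f (u i) \<bullet> f (w j))\<bar>)"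
      by (rule order_trans[OF sum_abs sum_mono[OF sum_abs]])
    also have "\<dots> \<le> (\<Sum>i\<in>I. \<Sum>j\<in>J. \<bar>c i\<bar> * \<bar>d j\<bar> * K)"
    proof (intro sum_mono)
      fix i j assume "i \<in> I" "j \<in> J"
      then have "\<bar>u i \<bullet> w j - f (u i) \<bullet> f (w j)\<bar> \<le> K" using hQ assms(3,4) by blast
      then show "\<bar>c i * d j * (u i \<bullet> w j - f (u i) \<bullet> f (w j))\<bar> \<le> \<bar>c i\<bar> * \<bar>d j\<bar> * K"
        by (simp add: abs_mult mult_left_mono)
    qed
    finally show ?thesis .
  qed
  also have "\<dots> = K * (\<Sum>i\<in>I. \<bar>c i\<bar>) * (\<Sum>j\<in>J. \<bar>d j\<bar>)"
    by (simp add: sum_product sum_distrib_left algebra_simps)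
  finally show ?thesis .
qed

lemma B_atomic:
  fixes f :: "'a::real_inner \<Rightarrow> 'b::real_inner"
  assumes lin: "linear f" and hQ: "\<forall>u1\<in>Q. \<forall>u2\<in>Q. \<bar>u1 \<bullet> u2 - f u1 \<bullet> f u2\<bar> \<le> K"
    and K0: "0 \<le> K" and x: "x \<in> span Q" and y: "y \<in> span Q"
  shows "\<bar>x \<bullet> y - f x \<bullet> f y\<bar> \<le> K * atomic_norm Q x * atomic_norm Q y"
proof -
  define S where "S z = {(\<Sum>i\<in>I. \<bar>c i\<bar>) | I c u.
      finite (I :: nat set) \<and> (\<forall>i\<in>I. u i \<in> Q) \<and> (\<Sum>i\<in>I. c i *\<^sub>R u i) = z}" for z
  have an: "atomic_norm Q z = Inf (S z)" for z unfolding S_def atomic_norm_def by simp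
  have ne: "S z \<noteq> {}" if "z \<in> span Q" for z
    using span_repr[OF that] unfolding S_def by blast
  have step1: "\<bar>x \<bullet> y - f x \<bullet> f y\<bar> \<le> (K * D) * atomic_norm Q x" if "D \<in> S y" for D
  proof -
    from that obtain J d w where J: "D = (\<Sum>j\<in>J. \<bar>d j\<bar>)" "finite (J :: nat set)" "\<forall>j\<in>J. w j \<in> Q"
        "(\<Sum>j\<in>J. d j *\<^sub>R w j) = y" unfolding S_def by blast
    have D0: "D \<ge> 0" using J by (simp add: sum_nonneg)
    show ?thesis unfolding an
    proof (rule inf_mult[OF ne[OF x]])
      show "0 \<le> K * D" using K0 D0 by simp
      show "\<forall>t\<in>S x. \<bar>x \<bullet> y - f x \<bullet> f y\<bar> \<le> K * D * t"
      proof
        fix t assume "t \<in> S x"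
        then obtain I c u where I: "t = (\<Sum>i\<in>I. \<bar>c i\<bar>)" "finite (I :: nat set)" "\<forall>i\<in>I. u i \<in> Q"
            "(\<Sum>i\<in>I. c i *\<^sub>R u i) = x" unfolding S_def by blast
        have "\<bar>x \<bullet> y - f x \<bullet> f y\<bar> \<le> K * t * D"
          using B_repr[OF lin hQ I(3) J(3), of c d] I J by simp
        then show "\<bar>x \<bullet> y - f x \<bullet> f y\<bar> \<le> K * D * t" by (simp add: algebra_simps)
      qed
    qed
  qed
  have "\<bar>x \<bullet> y - f x \<bullet> f y\<bar> \<le> (K * atomic_norm Q x) * Inf (S y)"
  proof (rule inf_mult[OF ne[OF y]])
    show "0 \<le> K * atomic_norm Q x" using K0 atomic_nonneg[OF x] by simp
    show "\<forall>t\<in>S y. \<bar>x \<bullet> y - f x \<bullet> f y\<bar> \<le> K * atomic_norm Q x * t"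
      using step1 by (simp add: algebra_simps)
  qed
  then show ?thesis using an by simp
qed

lemma arith_aux:
  fixes P Mm FP FM e A B X Y C :: real
  assumes "(1-e)*P \<le> FP" "FP \<le> (1+e)*P" "(1-e)*Mm \<le> FM" "FM \<le> (1+e)*Mm"
    "P - Mm = 4*X" "FP - FM = 4*Y" "e*P + e*Mm = 2*A + 2*B" "A \<le> C" "B \<le> C"
  shows "\<bar>X - Y\<bar> \<le> C"
proof -
  define p where "p = e*P"
  define m where "m = e*Mm"
  have "P - p \<le> FP" "FP \<le> P + p" "Mm - m \<le> FM" "FM \<le> Mm + m" "p + m = 2*A + 2*B"
    using assms unfolding p_def m_def by (simp_all add: algebra_simps)
  then show ?thesis using assms(5,6,8,9) by linarith
qed

lemma pair_bound:
  fixes f :: "'a::real_inner \<Rightarrow> 'b::real_inner"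
  assumes lin: "linear f" and sym: "uminus ` Q = Q" and JL: "JL_property f Q eps"
    and eps: "eps > 0" and M: "\<forall>u\<in>Q. norm u \<le> M"
    and u1: "u1 \<in> Q" and u2: "u2 \<in> Q"
  shows "\<bar>u1 \<bullet> u2 - f u1 \<bullet> f u2\<bar> \<le> eps * M\<^sup>2"
proof -
  interpret L: linear f by fact
  have mu2: "- u2 \<in> Q" using sym u2 by force
  have j1: "(1 - eps) * (norm (u1 - u2))\<^sup>2 \<le> (norm (f u1 - f u2))\<^sup>2"
       "(norm (f u1 - f u2))\<^sup>2 \<le> (1 + eps) * (norm (u1 - u2))\<^sup>2"
    using JL u1 u2 unfolding JL_property_def by auto
  have j2': "(1 - eps) * (norm (u1 - - u2))\<^sup>2 \<le> (norm (f u1 - f (- u2)))\<^sup>2"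
       "(norm (f u1 - f (- u2)))\<^sup>2 \<le> (1 + eps) * (norm (u1 - - u2))\<^sup>2"
    using JL u1 mu2 unfolding JL_property_def by blast+
  have j2: "(1 - eps) * (norm (u1 + u2))\<^sup>2 \<le> (norm (f u1 + f u2))\<^sup>2"
       "(norm (f u1 + f u2))\<^sup>2 \<le> (1 + eps) * (norm (u1 + u2))\<^sup>2"
    using j2' by (simp_all add: L.neg)
  have id1: "(norm (a + b))\<^sup>2 - (norm (a - b))\<^sup>2 = 4 * (a \<bullet> b)" for a b :: 'a
    by (simp add: power2_norm_eq_inner inner_add_left inner_add_right inner_diff_left inner_diff_right inner_commute)
  have id1': "(norm (a + b))\<^sup>2 - (norm (a - b))\<^sup>2 = 4 * (a \<bullet> b)" for a b :: 'b
    by (simp add: power2_norm_eq_inner inner_add_left inner_add_right inner_diff_left inner_diff_right inner_commute)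
  have id2: "(norm (a + b))\<^sup>2 + (norm (a - b))\<^sup>2 = 2 * (norm a)\<^sup>2 + 2 * (norm b)\<^sup>2" for a b :: 'a
    by (simp add: power2_norm_eq_inner inner_add_left inner_add_right inner_diff_left inner_diff_right inner_commute)
  have n1: "(norm u1)\<^sup>2 \<le> M\<^sup>2" using M u1 by (intro power_mono) auto
  have n2: "(norm u2)\<^sup>2 \<le> M\<^sup>2" using M u2 by (intro power_mono) auto
  have e1: "eps * (norm u1)\<^sup>2 \<le> eps * M\<^sup>2" using n1 eps by simp
  have e2: "eps * (norm u2)\<^sup>2 \<le> eps * M\<^sup>2" using n2 eps by simp
  have e3: "eps * (norm (u1 + u2))\<^sup>2 + eps * (norm (u1 - u2))\<^sup>2 = 2 * (eps * (norm u1)\<^sup>2) + 2 * (eps * (norm u2)\<^sup>2)"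
    using id2[of u1 u2] by (metis distrib_left mult.left_commute)
  have i1: "(norm (u1 + u2))\<^sup>2 - (norm (u1 - u2))\<^sup>2 = 4 * (u1 \<bullet> u2)" by (rule id1)
  have i2: "(norm (f u1 + f u2))\<^sup>2 - (norm (f u1 - f u2))\<^sup>2 = 4 * (f u1 \<bullet> f u2)" by (rule id1')
  show ?thesis by (rule arith_aux[OF j2 j1 i1 i2 e3 e1 e2])
qed


theorem mainTheorem7:
  fixes Q :: "'a::{real_inner, complete_space} set"
    and f :: "'a \<Rightarrow> 'b::euclidean_space"
    and eps :: real
  assumes "bounded Q"
    and "uminus ` Q = Q"
    and "bounded_linear f"
    and "eps > 0"
    and "JL_property f Q eps"
  shows "\<forall>v\<in>span Q. adjoint f (f v) \<in> span Q \<longrightarrow>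
    ereal (norm (v - adjoint f (f v))) \<le> ereal (eps * (MQ Q)\<^sup>2 * norm v) * (CQ Q)\<^sup>2"
proof (intro ballI impI)
  fix v assume v: "v \<in> span Q" and gv: "adjoint f (f v) \<in> span Q"
  have lin: "linear f" using assms(3) bounded_linear.linear by blast
  note adj = adjoint_props[OF assms(3)]
  define M where "M = MQ Q"
  define K where "K = eps * M\<^sup>2"
  have K0: "K \<ge> 0" unfolding K_def using assms(4) by simp
  obtain B where B: "\<forall>x\<in>Q. norm x \<le> B" using assms(1) bounded_iff by blast
  have Mb: "\<forall>u\<in>Q. norm u \<le> M"
    unfolding M_def MQ_def by (auto intro!: cSup_upper bdd_aboveI[of _ B] simp: B)
  have hQ: "\<forall>u1\<in>Q. \<forall>u2\<in>Q. \<bar>u1 \<bullet> u2 - f u1 \<bullet> f u2\<bar> \<le> K"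
    unfolding K_def using pair_bound[OF lin assms(2) assms(5) assms(4) Mb] by blast
  define y where "y = v - adjoint f (f v)"
  have y: "y \<in> span Q" unfolding y_def using v gv by (rule span_diff)
  have "(norm y)\<^sup>2 = v \<bullet> y - f v \<bullet> f y"
  proof -
    have "adjoint f (f v) \<bullet> y = f y \<bullet> f v" using adj(1) by (simp add: inner_commute)
    then show ?thesis unfolding power2_norm_eq_inner
      by (simp add: y_def[symmetric] inner_diff_left inner_commute)
        (simp add: y_def inner_diff_left inner_commute)
  qed
  then have main: "(norm y)\<^sup>2 \<le> K * atomic_norm Q v * atomic_norm Q y"
    using B_atomic[OF lin hQ K0 v y] by linarith
  define a where "a = eps * M\<^sup>2 * norm v"
  have a0: "a \<ge> 0" unfolding a_def using assms(4) by simp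
  have "ereal (norm y) \<le> ereal a * (CQ Q)\<^sup>2"
  proof (cases "a = 0")
    case True
    then have "M = 0 \<or> v = 0" unfolding a_def using assms(4) by simp
    then have "y = 0"
    proof
      assume "M = 0"
      then have "(norm y)\<^sup>2 \<le> 0" using main by (simp add: K_def)
      then show "y = 0" by simp
    next
      assume "v = 0"
      then show "y = 0" unfolding y_def using adj(2) linear_0[OF lin] by simp
    qed
    then show ?thesis using True by (simp flip: zero_ereal_def)
  next
    case False
    then have apos: "a > 0" using a0 by simp
    define s where "s = sqrt (norm y / a)"
    have s0: "s \<ge> 0" unfolding s_def using apos by simp
    have sc: "s \<le> c" if "c \<ge> 0" "\<forall>w\<in>span Q. atomic_norm Q w \<le> c * norm w" for c
    proof -
      have av: "atomic_norm Q v \<le> c * norm v" "atomic_norm Q y \<le> c * norm y" using that v y by auto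
      have "(norm y)\<^sup>2 \<le> K * (c * norm v) * (c * norm y)"
      proof -
        have m1: "K * atomic_norm Q v \<le> K * (c * norm v)" using av K0 by (simp add: mult_left_mono)
        moreover have "0 \<le> K * atomic_norm Q v" using K0 atomic_nonneg[OF v] by simp
        have "K * atomic_norm Q v * atomic_norm Q y \<le> K * (c * norm v) * (c * norm y)"
          by (rule mult_mono[OF m1 av(2)]) (use K0 that(1) atomic_nonneg[OF y] in auto)
        then show ?thesis using main by linarith
      qed
      also have "\<dots> = (a * c\<^sup>2) * norm y" unfolding a_def K_def by (simp add: power2_eq_square algebra_simps)
      finally have h: "norm y * norm y \<le> (a * c\<^sup>2) * norm y" by (simp add: power2_eq_square)
      have "norm y \<le> a * c\<^sup>2"
      proof (cases "norm y = 0")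
        case True then show ?thesis using a0 by simp
      next
        case False then show ?thesis using h by (simp add: mult_le_cancel_right)
      qed
      then have "norm y / a \<le> c\<^sup>2" using apos by (simp add: pos_divide_le_eq mult.commute)
      then have "s \<le> sqrt (c\<^sup>2)" unfolding s_def by (rule real_sqrt_le_mono)
      then show ?thesis using that by simp
    qed
    have sC: "ereal s \<le> CQ Q" unfolding CQ_def
      by (rule Inf_greatest) (auto intro: sc)
    have ny: "norm y = a * s\<^sup>2" unfolding s_def using apos by simp
    show ?thesis
    proof (cases "CQ Q")
      case (real r)
      then have "s \<le> r" using sC by simp
      then have "s\<^sup>2 \<le> r\<^sup>2" using s0 by (intro power_mono) auto
      then have "norm y \<le> a * r\<^sup>2" using ny apos by simp
      then show ?thesis using real by simp
    next
      case PInf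
      then show ?thesis using apos by simp
    next
      case MInf
      then show ?thesis using sC by simp
    qed
  qed
  then show "ereal (norm (v - adjoint f (f v))) \<le> ereal (eps * (MQ Q)\<^sup>2 * norm v) * (CQ Q)\<^sup>2"
    unfolding y_def a_def M_def .
qed

end
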